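(* Let $G$ be a finitely generated subgroup of $\mathrm{Aut}(X^* )$. Then $G$ has well-approximated subgroups if and only if $G$ is LERF and has the congruence subgroup property.
   Context: $X^*$ is the free monoid on a finite set $X$, viewed as a rooted tree; $X^n$ is level $n$, $\mathrm{Aut}(X^* )$ the group of prefix-preserving bijections, and $\mathrm{st}_G(n)$ the subgroup of $G$ fixing every vertex of $X^n$. $G$ has well-approximated subgroups if $\bigcap_{n\ge0}H\,\mathrm{st}_G(n)=H$ for every finitely generated $H\le G$. $G$ is LERF if every finitely generated subgroup is an intersection of finite index subgroups. $G$ has the congruence subgroup property if every finite index subgroup of $G$ contains $\mathrm{st}_G(n)$ for some $n$. *)

theory Defs
  imports "HOL-Algebra.Algebra" "HOL-Library.Sublist"
begin

text \<open>The alphabet X is the universe of a finite type 'a; X^* is 'a list.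
  Aut(X^*): bijections of X^* preserving the prefix relation (in both directions),
  a group under composition.\<close>

definition AutT :: "('a list \<Rightarrow> 'a list) monoid" where
  "AutT = \<lparr>carrier = {g. bij g \<and> (\<forall>u v. prefix u v \<longleftrightarrow> prefix (g u) (g v))},
           monoid.mult = (\<circ>), one = id\<rparr>"

definition grp :: "('a list \<Rightarrow> 'a list) set \<Rightarrow> ('a list \<Rightarrow> 'a list) monoid" where
  "grp G = AutT\<lparr>carrier := G\<rparr>"

definition st :: "('a list \<Rightarrow> 'a list) set \<Rightarrow> nat \<Rightarrow> ('a list \<Rightarrow> 'a list) set" where
  "st G n = {g \<in> G. \<forall>v. length v = n \<longrightarrow> g v = v}"

definition fg_subgroup_of_Aut :: "('a list \<Rightarrow> 'a list) set \<Rightarrow> bool" where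
  "fg_subgroup_of_Aut G \<longleftrightarrow> subgroup G AutT \<and>
     (\<exists>S. finite S \<and> S \<subseteq> G \<and> generate AutT S = G)"

definition fg_sub :: "('a list \<Rightarrow> 'a list) set \<Rightarrow> ('a list \<Rightarrow> 'a list) set \<Rightarrow> bool" where
  "fg_sub H G \<longleftrightarrow> subgroup H (grp G) \<and>
     (\<exists>S. finite S \<and> S \<subseteq> H \<and> generate (grp G) S = H)"

definition finite_index :: "('a list \<Rightarrow> 'a list) set \<Rightarrow> ('a list \<Rightarrow> 'a list) set \<Rightarrow> bool" where
  "finite_index K G \<longleftrightarrow> subgroup K (grp G) \<and> finite (rcosets\<^bsub>grp G\<^esub> K)"

definition well_approximated :: "('a list \<Rightarrow> 'a list) set \<Rightarrow> bool" where
  "well_approximated G \<longleftrightarrow>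
     (\<forall>H. fg_sub H G \<longrightarrow> (\<Inter>n. H <#>\<^bsub>grp G\<^esub> st G n) = H)"

definition LERF :: "('a list \<Rightarrow> 'a list) set \<Rightarrow> bool" where
  "LERF G \<longleftrightarrow>
     (\<forall>H. fg_sub H G \<longrightarrow> (\<exists>\<K>. (\<forall>K\<in>\<K>. finite_index K G) \<and> H = \<Inter>\<K>))"

definition CSP :: "('a list \<Rightarrow> 'a list) set \<Rightarrow> bool" where
  "CSP G \<longleftrightarrow> (\<forall>K. finite_index K G \<longrightarrow> (\<exists>n. st G n \<subseteq> K))"

end

theory Submission
  imports Defs
begin

lemma AutT_simps[simp]: "carrier AutT = {g. bij g \<and> (\<forall>u v. prefix u v \<longleftrightarrow> prefix (g u) (g v))}"
  "monoid.mult AutT = (\<circ>)" "monoid.one AutT = id"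
  by (simp_all add: AutT_def)

lemma group_AutT: "group (AutT :: ('a list \<Rightarrow> 'a list) monoid)"
proof (rule groupI)
  fix x y :: "'a list \<Rightarrow> 'a list" assume "x \<in> carrier AutT" "y \<in> carrier AutT"
  then have "bij x" "bij y" "\<And>u v. prefix u v \<longleftrightarrow> prefix (x u) (x v)" "\<And>u v. prefix u v \<longleftrightarrow> prefix (y u) (y v)"
    by simp_all
  then show "x \<otimes>\<^bsub>AutT\<^esub> y \<in> carrier AutT" by (simp add: bij_comp)
next
  show "\<one>\<^bsub>AutT\<^esub> \<in> carrier AutT" by simp
next
  fix x y z :: "'a list \<Rightarrow> 'a list" show "x \<otimes>\<^bsub>AutT\<^esub> y \<otimes>\<^bsub>AutT\<^esub> z = x \<otimes>\<^bsub>AutT\<^esub> (y \<otimes>\<^bsub>AutT\<^esub> z)" by (simp add: comp_assoc)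
next
  fix x :: "'a list \<Rightarrow> 'a list" show "\<one>\<^bsub>AutT\<^esub> \<otimes>\<^bsub>AutT\<^esub> x = x" by simp
next
  fix x :: "'a list \<Rightarrow> 'a list" assume x: "x \<in> carrier AutT"
  hence b: "bij x" and p: "\<And>u v. prefix u v \<longleftrightarrow> prefix (x u) (x v)" by simp_all
  have "\<And>u v. prefix u v \<longleftrightarrow> prefix (Hilbert_Choice.inv x u) (Hilbert_Choice.inv x v)"
    using p b by (metis bij_inv_eq_iff)
  hence "Hilbert_Choice.inv x \<in> carrier AutT"
    using b by (simp add: bij_imp_bij_inv)
  moreover have "Hilbert_Choice.inv x \<circ> x = id" using b by (simp add: bij_is_inj)
  ultimately show "\<exists>y\<in>carrier AutT. y \<otimes>\<^bsub>AutT\<^esub> x = \<one>\<^bsub>AutT\<^esub>" by auto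
qed

lemma card_prefixes_set: "card {u. prefix u v} = Suc (length v)"
proof -
  have "{u. prefix u v} = set (prefixes v)" by auto
  thus ?thesis using distinct_card[OF distinct_prefixes[of v]] by simp
qed

lemma AutT_len:
  assumes "g \<in> carrier AutT" shows "length (g v) = length v"
proof -
  from assms have b: "bij g" and p: "\<And>u v. prefix u v \<longleftrightarrow> prefix (g u) (g v)" by simp_all
  have "g ` {u. prefix u v} = {w. prefix w (g v)}"
  proof
    show "g ` {u. prefix u v} \<subseteq> {w. prefix w (g v)}" using p by blast
    show "{w. prefix w (g v)} \<subseteq> g ` {u. prefix u v}"
    proof
      fix w assume "w \<in> {w. prefix w (g v)}"
      moreover obtain u where "w = g u" using b by (metis bij_pointE)
      ultimately show "w \<in> g ` {u. prefix u v}" using p by blast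
    qed
  qed
  moreover have "inj_on g {u. prefix u v}" using b by (meson bij_is_inj inj_on_subset subset_UNIV)
  ultimately have "card {u. prefix u v} = card {w. prefix w (g v)}"
    using card_image by metis
  moreover note card_prefixes_set[of v] card_prefixes_set[of "g v"]
  ultimately show ?thesis by simp
qed



lemma (in group) gen_into_monoid:
  assumes "S \<subseteq> carrier G" "\<one> \<in> M" "\<And>x y. x \<in> M \<Longrightarrow> y \<in> M \<Longrightarrow> x \<otimes> y \<in> M"
    "\<And>s. s \<in> S \<Longrightarrow> s \<in> M" "\<And>s. s \<in> S \<Longrightarrow> inv s \<in> M"
    "g \<in> generate G S"
  shows "g \<in> M \<and> inv g \<in> M"
  using assms(6)
proof induction
  case one then show ?case using assms by simp
next
  case (incl h) then show ?case using assms by simp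
next
  case (inv h) then show ?case using assms by (auto simp: subsetD)
next
  case (eng h1 h2)
  have "inv (h1 \<otimes> h2) = inv h2 \<otimes> inv h1"
    using eng generate_in_carrier assms(1) by (meson inv_mult_group)
  then show ?case using eng assms by simp
qed

lemma (in group) schreier:
  assumes S: "finite S" "S \<subseteq> carrier G" "generate G S = carrier G"
    and K: "subgroup K G" "finite (rcosets K)"
  shows "\<exists>F. finite F \<and> F \<subseteq> K \<and> generate G F = K"
proof -
  interpret K: subgroup K G by (rule K(1))
  define r where "r c = (if c = K then \<one> else (SOME x. x \<in> c))" for c
  have rc: "r c \<in> c" if "c \<in> rcosets K" for c
  proof (cases "c = K")
    case True then show ?thesis by (simp add: r_def)
  next
    case False
    from that obtain a where a: "a \<in> carrier G" "c = K #> a" unfolding RCOSETS_def by auto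
    then have "a \<in> c" using rcos_self K(1) by auto
    then show ?thesis using False unfolding r_def by (metis someI_ex)
  qed
  have rcG: "r c \<in> carrier G" if "c \<in> rcosets K" for c
    using rc[OF that] K.rcosets_carrier[OF is_group that] by auto
  define T where "T = r ` (rcosets K)"
  have Tfin: "finite T" using K(2) T_def by simp
  have TG: "T \<subseteq> carrier G" using rcG T_def by auto
  define rep where "rep g = r (K #> g)" for g
  have repc: "rep g \<in> K #> g" "rep g \<in> T" if "g \<in> carrier G" for g
    using rc[of "K #> g"] rcosetsI[OF K.subset that] that unfolding rep_def T_def by auto
  define S' where "S' = S \<union> (\<lambda>s. inv s) ` S"
  have S'G: "S' \<subseteq> carrier G" using S(2) by (auto simp: S'_def)
  define F where "F = (\<lambda>(t,s). t \<otimes> s \<otimes> inv (rep (t \<otimes> s))) ` (T \<times> S')"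
  have Ffin: "finite F" using Tfin S(1) by (simp add: F_def S'_def)
  have FK: "F \<subseteq> K"
  proof
    fix f assume "f \<in> F"
    then obtain t s where ts: "t \<in> T" "s \<in> S'" "f = t \<otimes> s \<otimes> inv (rep (t \<otimes> s))"
      unfolding F_def by auto
    have tsG: "t \<otimes> s \<in> carrier G" using ts TG S'G by auto
    have "rep (t \<otimes> s) \<otimes> inv (t \<otimes> s) \<in> K"
      using K.rcos_module_imp[OF is_group tsG repc(1)[OF tsG]] .
    hence "inv (rep (t \<otimes> s) \<otimes> inv (t \<otimes> s)) \<in> K" by simp
    moreover have "inv (rep (t \<otimes> s) \<otimes> inv (t \<otimes> s)) = f"
    proof -
      have "rep (t \<otimes> s) \<in> carrier G" using repc(2)[OF tsG] TG by auto
      then show ?thesis using ts(3) tsG by (simp add: inv_mult_group)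
    qed
    ultimately show "f \<in> K" by simp
  qed
  have FG: "F \<subseteq> carrier G" using FK K.subset by auto
  define H where "H = generate G F"
  interpret H: subgroup H G unfolding H_def by (rule generate_is_subgroup[OF FG])
  have HK: "H \<subseteq> K" unfolding H_def by (rule generate_subgroup_incl[OF FK K(1)])
  define M where "M = {g \<in> carrier G. \<forall>x \<in> H <#> T. x \<otimes> g \<in> H <#> T}"
  have HTG: "H <#> T \<subseteq> carrier G" using setmult_subset_G[OF H.subset TG] .
  have sM: "s \<in> M" if "s \<in> S'" for s
  proof -
    have sG: "s \<in> carrier G" using that S'G by auto
    { fix x assume "x \<in> H <#> T"
      then obtain h t where ht: "h \<in> H" "t \<in> T" "x = h \<otimes> t" unfolding set_mult_def by auto
      have tsG: "t \<otimes> s \<in> carrier G" using ht TG sG by auto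
      define f where "f = t \<otimes> s \<otimes> inv (rep (t \<otimes> s))"
      have fH: "f \<in> H" unfolding f_def H_def using ht that by (auto simp: F_def intro!: generate.incl)
      have rG: "rep (t \<otimes> s) \<in> carrier G" using repc(2)[OF tsG] TG by auto
      have "x \<otimes> s = (h \<otimes> f) \<otimes> rep (t \<otimes> s)"
        using ht TG sG rG H.subset by (simp add: f_def m_assoc subsetD)
      moreover have "h \<otimes> f \<in> H" using ht fH by simp
      ultimately have "x \<otimes> s \<in> H <#> T" using repc(2)[OF tsG] unfolding set_mult_def by auto }
    then show ?thesis using sG M_def by auto
  qed
  have allM: "carrier G \<subseteq> M"
  proof
    fix g assume "g \<in> carrier G"
    then have "g \<in> generate G S" using S(3) by simp
    then show "g \<in> M"
    proof (rule gen_into_monoid[OF S(2), THEN conjunct1, rotated 4])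
      show "\<one> \<in> M" using HTG unfolding M_def by (auto simp: subsetD)
      show "x \<otimes> y \<in> M" if "x \<in> M" "y \<in> M" for x y
        using that HTG unfolding M_def by (auto simp: m_assoc[symmetric] subsetD)
      show "s \<in> M" if "s \<in> S" for s using sM that S'_def by auto
      show "inv s \<in> M" if "s \<in> S" for s using sM that S'_def by auto
    qed
  qed
  have KT: "K \<in> rcosets K" using coset_join2[OF one_closed K(1) K.one_closed] rcosetsI[OF K.subset one_closed] by simp
  have oneT: "\<one> \<in> T" using KT unfolding T_def r_def by force
  have "K \<subseteq> H"
  proof
    fix k assume k: "k \<in> K"
    have kG: "k \<in> carrier G" using k K.subset by blast
    have "\<one> \<otimes> \<one> \<in> H <#> T" using oneT H.one_closed unfolding set_mult_def by blast
    hence "\<one> \<in> H <#> T" by simp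
    moreover have "k \<in> M" using allM kG by (rule subsetD)
    ultimately have "\<one> \<otimes> k \<in> H <#> T" unfolding M_def by blast
    hence "k \<in> H <#> T" using kG by simp
    then obtain h t where ht: "h \<in> H" "t \<in> T" "k = h \<otimes> t" unfolding set_mult_def by blast
    obtain c where c: "c \<in> rcosets K" "t = r c" using ht(2) T_def by blast
    have hG: "h \<in> carrier G" using ht(1) H.subset by blast
    have tG: "t \<in> carrier G" using ht(2) TG by blast
    have "inv h \<otimes> k = t" using ht(3) hG tG by (simp add: m_assoc[symmetric])
    moreover have "inv h \<otimes> k \<in> K" using ht(1) HK k by blast
    ultimately have tK: "t \<in> K" by simp
    have "t \<in> c" using rc c by blast
    hence "c = K" using tK rcos_disjoint[OF K(1)] c(1) KT unfolding pairwise_def disjnt_def by blast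
    hence "t = \<one>" using c(2) r_def by simp
    then show "k \<in> H" using ht hG by simp
  qed
  with HK have "H = K" by auto
  then show ?thesis using Ffin FK H_def by auto
qed



lemma prefix_same_len: "prefix a w \<Longrightarrow> prefix b w \<Longrightarrow> length a = length b \<Longrightarrow> a = b"
  by (metis prefix_length_prefix prefix_order.antisym order_refl)

locale autsub =
  fixes G :: "('a::finite list \<Rightarrow> 'a list) set"
  assumes sg: "subgroup G AutT"
begin

abbreviation "\<Gamma> \<equiv> grp G"

lemma grp_carrier[simp]: "carrier \<Gamma> = G"
  by (simp_all add: grp_def AutT_def)
lemma grp_simps: "carrier \<Gamma> = G" "monoid.mult \<Gamma> = (\<circ>)" "monoid.one \<Gamma> = id"
  by (simp_all add: grp_def AutT_def)

lemma grp_group: "group \<Gamma>"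
  unfolding grp_def by (rule subgroup.subgroup_is_group[OF sg group_AutT])

sublocale Gr: group \<Gamma> by (rule grp_group)

lemma GAut: "g \<in> G \<Longrightarrow> g \<in> carrier AutT"
  using subgroup.subset[OF sg] by blast

lemma len: "g \<in> G \<Longrightarrow> length (g v) = length v"
  using AutT_len[OF GAut] .

lemma inv_simps:
  assumes "g \<in> G"
  shows "g ((inv\<^bsub>\<Gamma>\<^esub> g) v) = v" "(inv\<^bsub>\<Gamma>\<^esub> g) (g v) = v" "inv\<^bsub>\<Gamma>\<^esub> g \<in> G"
proof -
  have "g \<otimes>\<^bsub>\<Gamma>\<^esub> inv\<^bsub>\<Gamma>\<^esub> g = \<one>\<^bsub>\<Gamma>\<^esub>" using assms by simp
  then show "g ((inv\<^bsub>\<Gamma>\<^esub> g) v) = v" by (metis comp_apply grp_simps(2,3) id_apply)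
  have "inv\<^bsub>\<Gamma>\<^esub> g \<otimes>\<^bsub>\<Gamma>\<^esub> g = \<one>\<^bsub>\<Gamma>\<^esub>" using assms by simp
  then show "(inv\<^bsub>\<Gamma>\<^esub> g) (g v) = v" by (metis comp_apply grp_simps(2,3) id_apply)
  show "inv\<^bsub>\<Gamma>\<^esub> g \<in> G" using assms Gr.inv_closed by simp
qed

lemma st_sub: "st G n \<subseteq> G" by (auto simp: st_def)

lemma st_normal: "st G n \<lhd> \<Gamma>"
proof -
  have sub: "subgroup (st G n) \<Gamma>"
  proof (rule Gr.subgroupI)
    show "st G n \<subseteq> carrier \<Gamma>" using st_sub by simp
    show "st G n \<noteq> {}" using Gr.one_closed by (auto simp: st_def grp_simps)
    show "inv\<^bsub>\<Gamma>\<^esub> a \<in> st G n" if "a \<in> st G n" for a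
    proof -
      have aG: "a \<in> G" and fx: "\<And>v. length v = n \<Longrightarrow> a v = v" using that by (auto simp: st_def)
      { fix v :: "'a list" assume "length v = n"
        then have "length ((inv\<^bsub>\<Gamma>\<^esub> a) v) = n" using len inv_simps(3)[OF aG] by simp
        then have "a ((inv\<^bsub>\<Gamma>\<^esub> a) v) = (inv\<^bsub>\<Gamma>\<^esub> a) v" using fx by simp
        then have "(inv\<^bsub>\<Gamma>\<^esub> a) v = v" using inv_simps(1)[OF aG] by simp }
      then show ?thesis using inv_simps(3)[OF aG] by (auto simp: st_def)
    qed
    show "a \<otimes>\<^bsub>\<Gamma>\<^esub> b \<in> st G n" if "a \<in> st G n" "b \<in> st G n" for a b
      using that Gr.m_closed by (auto simp: st_def grp_simps)
  qed
  show ?thesis unfolding Gr.normal_inv_iff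
  proof (intro conjI ballI sub)
    fix x h assume x: "x \<in> carrier \<Gamma>" and h: "h \<in> st G n"
    have xG: "x \<in> G" using x by simp
    have hG: "h \<in> G" and fx: "\<And>v. length v = n \<Longrightarrow> h v = v" using h by (auto simp: st_def)
    have "x \<otimes>\<^bsub>\<Gamma>\<^esub> h \<otimes>\<^bsub>\<Gamma>\<^esub> inv\<^bsub>\<Gamma>\<^esub> x \<in> G" using xG hG Gr.m_closed Gr.inv_closed by simp
    moreover
    { fix v :: "'a list" assume "length v = n"
      then have "length ((inv\<^bsub>\<Gamma>\<^esub> x) v) = n" using len inv_simps(3)[OF xG] by simp
      then have "(x \<otimes>\<^bsub>\<Gamma>\<^esub> h \<otimes>\<^bsub>\<Gamma>\<^esub> inv\<^bsub>\<Gamma>\<^esub> x) v = v" using fx inv_simps(1)[OF xG] by (simp add: grp_simps) }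
    ultimately show "x \<otimes>\<^bsub>\<Gamma>\<^esub> h \<otimes>\<^bsub>\<Gamma>\<^esub> inv\<^bsub>\<Gamma>\<^esub> x \<in> st G n" by (simp add: st_def)
  qed
qed

lemma st_mono: assumes "m \<le> n" shows "st G n \<subseteq> st G m"
proof
  fix g assume g: "g \<in> st G n"
  have gG: "g \<in> G" and fx: "\<And>v. length v = n \<Longrightarrow> g v = v" using g by (auto simp: st_def)
  { fix v :: "'a list" assume v: "length v = m"
    define w where "w = v @ replicate (n - m) undefined"
    have lw: "length w = n" using v assms by (simp add: w_def)
    have pv: "prefix v w" by (simp add: w_def)
    hence "prefix (g v) (g w)" using GAut[OF gG] by simp
    hence "prefix (g v) w" using fx[OF lw] by simp
    moreover have "length (g v) = length v" using len[OF gG] .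
    ultimately have "g v = v" using pv prefix_same_len by blast }
  then show "g \<in> st G m" using gG by (simp add: st_def)
qed

lemma fin_index:
  assumes K: "subgroup K \<Gamma>" "st G n \<subseteq> K"
  shows "finite (rcosets\<^bsub>\<Gamma>\<^esub> K)"
proof -
  interpret K: subgroup K \<Gamma> by (rule K(1))
  define L where "L = {v :: 'a list. length v = n}"
  have Lfin: "finite L"
  proof -
    have "L = {xs. set xs \<subseteq> UNIV \<and> length xs = n}" by (simp add: L_def)
    thus ?thesis using finite_lists_length_eq[OF finite_class.finite_UNIV, of n] by simp
  qed
  define \<phi> where "\<phi> g = restrict g L" for g :: "'a list \<Rightarrow> 'a list"
  have "\<phi> g \<in> PiE L (\<lambda>_. L)" if "g \<in> G" for g
    unfolding \<phi>_def using len[OF that] by (simp add: restrict_PiE_iff L_def)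
  hence "\<phi> ` G \<subseteq> PiE L (\<lambda>_. L)" by blast
  hence phifin: "finite (\<phi> ` G)" using finite_PiE[OF Lfin, of "\<lambda>_. L"] Lfin finite_subset by blast
  define \<psi> where "\<psi> f = K #>\<^bsub>\<Gamma>\<^esub> (SOME g. g \<in> G \<and> \<phi> g = f)" for f
  have "rcosets\<^bsub>\<Gamma>\<^esub> K \<subseteq> \<psi> ` (\<phi> ` G)"
  proof
    fix c assume "c \<in> rcosets\<^bsub>\<Gamma>\<^esub> K"
    then obtain g where g: "g \<in> G" "c = K #>\<^bsub>\<Gamma>\<^esub> g" unfolding RCOSETS_def by auto
    define g' where "g' = (SOME g'. g' \<in> G \<and> \<phi> g' = \<phi> g)"
    have g': "g' \<in> G" "\<phi> g' = \<phi> g" unfolding g'_def using someI_ex[of "\<lambda>g'. g' \<in> G \<and> \<phi> g' = \<phi> g"] g by auto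
    have agree: "g' v = g v" if "length v = n" for v
      using fun_cong[OF g'(2), of v] that by (simp add: \<phi>_def L_def)
    have "g \<otimes>\<^bsub>\<Gamma>\<^esub> inv\<^bsub>\<Gamma>\<^esub> g' \<in> st G n"
    proof -
      have "g \<otimes>\<^bsub>\<Gamma>\<^esub> inv\<^bsub>\<Gamma>\<^esub> g' \<in> G" using g g' Gr.m_closed Gr.inv_closed by simp
      moreover
      { fix v :: "'a list" assume "length v = n"
        then have "length ((inv\<^bsub>\<Gamma>\<^esub> g') v) = n" using len inv_simps(3)[OF g'(1)] by simp
        then have "(g \<otimes>\<^bsub>\<Gamma>\<^esub> inv\<^bsub>\<Gamma>\<^esub> g') v = v"
          using agree inv_simps(1)[OF g'(1)] by (metis comp_apply grp_simps(2)) }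
      ultimately show ?thesis by (simp add: st_def)
    qed
    hence "g \<in> K #>\<^bsub>\<Gamma>\<^esub> g'" using K.rcos_module[OF Gr.is_group, of g' g] g g' K(2) by auto
    hence "K #>\<^bsub>\<Gamma>\<^esub> g = K #>\<^bsub>\<Gamma>\<^esub> g'"
      using Gr.repr_independence[OF _ _ K(1)] g' by (metis grp_simps(1))
    thus "c \<in> \<psi> ` (\<phi> ` G)" using g unfolding \<psi>_def g'_def by auto
  qed
  thus ?thesis using phifin finite_subset by blast
qed

lemma HN_subgroup:
  assumes H: "subgroup H \<Gamma>"
  shows "subgroup (H <#>\<^bsub>\<Gamma>\<^esub> st G n) \<Gamma>"
proof -
  interpret N: normal "st G n" \<Gamma> by (rule st_normal)
  interpret H: subgroup H \<Gamma> by (rule H)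
  have "H <#>\<^bsub>\<Gamma>\<^esub> st G n = st G n <#>\<^bsub>\<Gamma>\<^esub> H"
  proof
    show "H <#>\<^bsub>\<Gamma>\<^esub> st G n \<subseteq> st G n <#>\<^bsub>\<Gamma>\<^esub> H"
    proof
      fix x assume "x \<in> H <#>\<^bsub>\<Gamma>\<^esub> st G n"
      then obtain h k where hk: "h \<in> H" "k \<in> st G n" "x = h \<otimes>\<^bsub>\<Gamma>\<^esub> k" unfolding set_mult_def by auto
      have hG: "h \<in> carrier \<Gamma>" using hk H.subset by blast
      have kG: "k \<in> carrier \<Gamma>" using hk N.subset by blast
      have "x = (h \<otimes>\<^bsub>\<Gamma>\<^esub> k \<otimes>\<^bsub>\<Gamma>\<^esub> inv\<^bsub>\<Gamma>\<^esub> h) \<otimes>\<^bsub>\<Gamma>\<^esub> h"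
      proof -
        have "h \<otimes>\<^bsub>\<Gamma>\<^esub> k \<otimes>\<^bsub>\<Gamma>\<^esub> inv\<^bsub>\<Gamma>\<^esub> h \<otimes>\<^bsub>\<Gamma>\<^esub> h = h \<otimes>\<^bsub>\<Gamma>\<^esub> k \<otimes>\<^bsub>\<Gamma>\<^esub> (inv\<^bsub>\<Gamma>\<^esub> h \<otimes>\<^bsub>\<Gamma>\<^esub> h)"
          using hG kG by (meson Gr.inv_closed Gr.m_assoc Gr.m_closed)
        also have "\<dots> = h \<otimes>\<^bsub>\<Gamma>\<^esub> k" using hG kG by (metis Gr.l_inv Gr.m_closed Gr.r_one)
        finally show ?thesis using hk(3) by simp
      qed
      moreover have "h \<otimes>\<^bsub>\<Gamma>\<^esub> k \<otimes>\<^bsub>\<Gamma>\<^esub> inv\<^bsub>\<Gamma>\<^esub> h \<in> st G n" using N.inv_op_closed2 hG hk(2) by blast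
      ultimately show "x \<in> st G n <#>\<^bsub>\<Gamma>\<^esub> H" using hk(1) unfolding set_mult_def by blast
    qed
    show "st G n <#>\<^bsub>\<Gamma>\<^esub> H \<subseteq> H <#>\<^bsub>\<Gamma>\<^esub> st G n"
    proof
      fix x assume "x \<in> st G n <#>\<^bsub>\<Gamma>\<^esub> H"
      then obtain h k where hk: "h \<in> H" "k \<in> st G n" "x = k \<otimes>\<^bsub>\<Gamma>\<^esub> h" unfolding set_mult_def by auto
      have hG: "h \<in> carrier \<Gamma>" using hk H.subset by blast
      have kG: "k \<in> carrier \<Gamma>" using hk N.subset by blast
      have "x = h \<otimes>\<^bsub>\<Gamma>\<^esub> (inv\<^bsub>\<Gamma>\<^esub> h \<otimes>\<^bsub>\<Gamma>\<^esub> k \<otimes>\<^bsub>\<Gamma>\<^esub> h)"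
      proof -
        have ih: "inv\<^bsub>\<Gamma>\<^esub> h \<in> carrier \<Gamma>" using hG by (rule Gr.inv_closed)
        have "h \<otimes>\<^bsub>\<Gamma>\<^esub> (inv\<^bsub>\<Gamma>\<^esub> h \<otimes>\<^bsub>\<Gamma>\<^esub> k \<otimes>\<^bsub>\<Gamma>\<^esub> h) = h \<otimes>\<^bsub>\<Gamma>\<^esub> (inv\<^bsub>\<Gamma>\<^esub> h \<otimes>\<^bsub>\<Gamma>\<^esub> (k \<otimes>\<^bsub>\<Gamma>\<^esub> h))"
          using Gr.m_assoc[OF ih kG hG] by simp
        also have "\<dots> = (h \<otimes>\<^bsub>\<Gamma>\<^esub> inv\<^bsub>\<Gamma>\<^esub> h) \<otimes>\<^bsub>\<Gamma>\<^esub> (k \<otimes>\<^bsub>\<Gamma>\<^esub> h)"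
          using Gr.m_assoc[OF hG ih Gr.m_closed[OF kG hG]] by simp
        also have "\<dots> = k \<otimes>\<^bsub>\<Gamma>\<^esub> h" using Gr.r_inv[OF hG] Gr.l_one[OF Gr.m_closed[OF kG hG]] by simp
        finally show ?thesis using hk(3) by simp
      qed
      moreover have "inv\<^bsub>\<Gamma>\<^esub> h \<otimes>\<^bsub>\<Gamma>\<^esub> k \<otimes>\<^bsub>\<Gamma>\<^esub> h \<in> st G n" using N.inv_op_closed1 hG hk(2) by blast
      ultimately show "x \<in> H <#>\<^bsub>\<Gamma>\<^esub> st G n" using hk(1) unfolding set_mult_def by blast
    qed
  qed
  then show ?thesis using Gr.mult_norm_subgroup[OF st_normal H] by simp
qed

end



theorem lemma2p12:
  fixes G :: "('a::finite list \<Rightarrow> 'a list) set"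
  assumes "fg_subgroup_of_Aut G"
  shows "well_approximated G \<longleftrightarrow> LERF G \<and> CSP G"
proof -
  from assms obtain S where sg: "subgroup G AutT" and S: "finite S" "S \<subseteq> G" "generate AutT S = G"
    unfolding fg_subgroup_of_Aut_def by blast
  interpret autsub G using sg by (simp add: autsub_def)
  have genS: "generate (grp G) S = carrier (grp G)"
    using group.generate_consistent[OF group_AutT S(2) sg] S(3) unfolding grp_def by simp
  have oneSt: "\<one>\<^bsub>grp G\<^esub> \<in> st G n" for n
    using st_normal[of n] by (simp add: normal_def subgroup.one_closed)
  have stK: "st G n \<subseteq> H <#>\<^bsub>grp G\<^esub> st G n" if "subgroup H (grp G)" for H n
  proof
    fix s assume s: "s \<in> st G n"
    hence "s \<in> G" using st_sub by blast
    hence "s = \<one>\<^bsub>grp G\<^esub> \<otimes>\<^bsub>grp G\<^esub> s" by simp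
    moreover have "\<one>\<^bsub>grp G\<^esub> \<in> H" using that by (rule subgroup.one_closed)
    ultimately show "s \<in> H <#>\<^bsub>grp G\<^esub> st G n" using s unfolding set_mult_def by blast
  qed
  have Hsub: "H \<subseteq> H <#>\<^bsub>grp G\<^esub> st G n" if "subgroup H (grp G)" for H n
  proof
    fix h assume h: "h \<in> H"
    hence "h \<in> G" using subgroup.subset[OF that] by auto
    hence "h = h \<otimes>\<^bsub>grp G\<^esub> \<one>\<^bsub>grp G\<^esub>" by simp
    thus "h \<in> H <#>\<^bsub>grp G\<^esub> st G n" using h oneSt[of n] unfolding set_mult_def by blast
  qed
  show ?thesis
  proof
    assume WA: "well_approximated G"
    have "LERF G" unfolding LERF_def
    proof (intro allI impI)
      fix H assume H: "fg_sub H G"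
      hence Hs: "subgroup H (grp G)" by (simp add: fg_sub_def)
      let ?K = "range (\<lambda>n. H <#>\<^bsub>grp G\<^esub> st G n)"
      have "\<forall>K\<in>?K. finite_index K G"
      proof
        fix K assume "K \<in> ?K"
        then obtain n where n: "K = H <#>\<^bsub>grp G\<^esub> st G n" by blast
        show "finite_index K G" unfolding finite_index_def n
          using HN_subgroup[OF Hs] fin_index[OF HN_subgroup[OF Hs] stK[OF Hs]] by blast
      qed
      moreover have "H = \<Inter>?K" using WA H unfolding well_approximated_def by simp
      ultimately show "\<exists>\<K>. (\<forall>K\<in>\<K>. finite_index K G) \<and> H = \<Inter>\<K>" by blast
    qed
    moreover have "CSP G" unfolding CSP_def
    proof (intro allI impI)
      fix K assume K: "finite_index K G"
      hence Ks: "subgroup K (grp G)" and Kf: "finite (rcosets\<^bsub>grp G\<^esub> K)" by (simp_all add: finite_index_def)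
      interpret K: subgroup K "grp G" by (rule Ks)
      obtain F where "finite F" "F \<subseteq> K" "generate (grp G) F = K"
        using Gr.schreier[OF S(1) _ genS Ks Kf] S(2) by auto
      hence "fg_sub K G" using Ks unfolding fg_sub_def by blast
      hence WAK: "(\<Inter>n. K <#>\<^bsub>grp G\<^esub> st G n) = K" using WA unfolding well_approximated_def by blast
      define C where "C = rcosets\<^bsub>grp G\<^esub> K - {K}"
      define x where "x c = (SOME y. y \<in> c)" for c :: "('a list \<Rightarrow> 'a list) set"
      have xc: "x c \<in> c" "x c \<notin> K" if "c \<in> C" for c
      proof -
        from that obtain a where a: "a \<in> G" "c = K #>\<^bsub>grp G\<^esub> a" "c \<noteq> K"
          unfolding C_def RCOSETS_def by auto
        have "a \<in> c" using Gr.rcos_self[of a K] a Ks by simp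
        thus xin: "x c \<in> c" unfolding x_def by (metis someI_ex)
        show "x c \<notin> K"
        proof
          assume xK: "x c \<in> K"
          have "K #>\<^bsub>grp G\<^esub> a = K #>\<^bsub>grp G\<^esub> x c"
            using Gr.repr_independence[of "x c" K a] xin a Ks by simp
          also have "\<dots> = K" using Gr.coset_join2[of "x c" K] xK Ks K.subset by auto
          finally show False using a by simp
        qed
      qed
      have "\<exists>n. x c \<notin> K <#>\<^bsub>grp G\<^esub> st G n" if "c \<in> C" for c
        using xc[OF that] WAK by blast
      then obtain nc where nc: "\<And>c. c \<in> C \<Longrightarrow> x c \<notin> K <#>\<^bsub>grp G\<^esub> st G (nc c)" by metis
      define N where "N = (\<Sum>c\<in>C. nc c)"
      have Cfin: "finite C" using Kf C_def by simp
      have "st G N \<subseteq> K"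
      proof
        fix s assume s: "s \<in> st G N"
        have sG: "s \<in> G" using s st_sub by blast
        show "s \<in> K"
        proof (rule ccontr)
          assume sK: "s \<notin> K"
          define c where "c = K #>\<^bsub>grp G\<^esub> s"
          have "s \<in> c" using Gr.rcos_self[of s K] sG Ks c_def by simp
          hence "c \<noteq> K" using sK by blast
          moreover have "c \<in> rcosets\<^bsub>grp G\<^esub> K" using Gr.rcosetsI[OF K.subset] sG c_def by simp
          ultimately have cC: "c \<in> C" using C_def by blast
          have "x c \<in> c" using xc[OF cC] by simp
          then obtain k where k: "k \<in> K" "x c = k \<otimes>\<^bsub>grp G\<^esub> s" unfolding c_def r_coset_def by blast
          have "nc c \<le> N" unfolding N_def using Cfin cC by (simp add: member_le_sum)
          hence "s \<in> st G (nc c)" using st_mono s by blast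
          hence "x c \<in> K <#>\<^bsub>grp G\<^esub> st G (nc c)" using k unfolding set_mult_def by blast
          thus False using nc[OF cC] by blast
        qed
      qed
      thus "\<exists>n. st G n \<subseteq> K" by blast
    qed
    ultimately show "LERF G \<and> CSP G" by blast
  next
    assume A: "LERF G \<and> CSP G"
    show "well_approximated G" unfolding well_approximated_def
    proof (intro allI impI)
      fix H assume H: "fg_sub H G"
      hence Hs: "subgroup H (grp G)" by (simp add: fg_sub_def)
      obtain \<K> where KK: "\<forall>K\<in>\<K>. finite_index K G" "H = \<Inter>\<K>"
        using A H unfolding LERF_def by blast
      show "(\<Inter>n. H <#>\<^bsub>grp G\<^esub> st G n) = H"
      proof
        show "H \<subseteq> (\<Inter>n. H <#>\<^bsub>grp G\<^esub> st G n)" using Hsub[OF Hs] by blast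
        show "(\<Inter>n. H <#>\<^bsub>grp G\<^esub> st G n) \<subseteq> H"
        proof
          fix y assume y: "y \<in> (\<Inter>n. H <#>\<^bsub>grp G\<^esub> st G n)"
          have "y \<in> K" if K: "K \<in> \<K>" for K
          proof -
            have Ks: "subgroup K (grp G)" using KK(1) K by (simp add: finite_index_def)
            obtain n where n: "st G n \<subseteq> K" using A KK(1) K unfolding CSP_def by blast
            have HK: "H \<subseteq> K" using KK(2) K by blast
            from y have "y \<in> H <#>\<^bsub>grp G\<^esub> st G n" by blast
            then obtain h t where "h \<in> H" "t \<in> st G n" "y = h \<otimes>\<^bsub>grp G\<^esub> t" unfolding set_mult_def by blast
            thus "y \<in> K" using HK n subgroup.m_closed[OF Ks] by blast
          qed
          thus "y \<in> H" using KK(2) by blast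
        qed
      qed
    qed
  qed
qed


end
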